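(* Let $\Lambda$ be a unital commutative ring, $q$ a non-negative integer, $\mathfrak g$ a Lie algebra over $\Lambda$ and $\mathfrak h$ an ideal of $\mathfrak g$. Then the canonical sequence of Lie algebras $\mathfrak h\wedge^q\mathfrak g\longrightarrow\mathfrak g\wedge^q\mathfrak g\longrightarrow(\mathfrak g/\mathfrak h)\wedge^q(\mathfrak g/\mathfrak h)\longrightarrow0$ is exact.
   Context: All Lie algebras are over $\Lambda$. For an ideal $\mathfrak h$ of $\mathfrak g$ and $q\ge1$, $\mathfrak h\otimes^q\mathfrak g$ is the Lie algebra generated by symbols $h\otimes g$, $\{h\}$ ($h\in\mathfrak h,g\in\mathfrak g$) subject to, for all $h,h'\in\mathfrak h$, $g,g'\in\mathfrak g$, $\lambda,\lambda'\in\Lambda$: (1) $\lambda(h\otimes g)=\lambda h\otimes g=h\otimes\lambda g$; (2) $(h+h')\otimes g=h\otimes g+h'\otimes g$; (3) $h\otimes(g+g')=h\otimes g+h\otimes g'$; (4) $[h,h']\otimes g=h\otimes[h',g]-h'\otimes[h,g]$; (5) $h\otimes[g,g']=[g',h]\otimes g-[g,h]\otimes g'$; (6) $[h\otimes g,h'\otimes g']=[h,g]\otimes[h',g']$; (7) $[\{h'\},h\otimes g]=[qh',h]\otimes g+h\otimes[qh',g]$; (8) $\{\lambda h+\lambda'h'\}=\lambda\{h\}+\lambda'\{h'\}$; (9) $[\{h\},\{h'\}]=qh\otimes qh'$; (10) $\{[h,g]\}=q(h\otimes g)$. For $q=0$, it is generated by the $h\otimes g$ subject to (1)–(6) only. The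 $q$-exterior product $\mathfrak h\wedge^q\mathfrak g$ is the quotient by the relations $h\otimes h=0$, $h\in\mathfrak h$, with images $h\wedge g,\{h\}$. The canonical maps are $h\wedge g\mapsto h\wedge g$, $\{h\}\mapsto\{h\}$ and $g\wedge g'\mapsto (g+\mathfrak h)\wedge(g'+\mathfrak h)$, $\{g\}\mapsto\{g+\mathfrak h\}$. *)

theory Defs
  imports Main
begin

record ('r, 'a) lie_alg =
  lcarrier :: "'a set"
  lzero :: 'a
  ladd :: "'a \<Rightarrow> 'a \<Rightarrow> 'a"
  lneg :: "'a \<Rightarrow> 'a"
  lsmul :: "'r \<Rightarrow> 'a \<Rightarrow> 'a"
  lbr :: "'a \<Rightarrow> 'a \<Rightarrow> 'a"

definition lie_algebra :: "('r::comm_ring_1, 'a) lie_alg \<Rightarrow> bool" where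
  "lie_algebra L \<longleftrightarrow>
    (let C = lcarrier L; add = ladd L; z = lzero L; ng = lneg L; sm = lsmul L; br = lbr L in
     z \<in> C \<and>
     (\<forall>x\<in>C. \<forall>y\<in>C. add x y \<in> C) \<and>
     (\<forall>x\<in>C. ng x \<in> C) \<and>
     (\<forall>r. \<forall>x\<in>C. sm r x \<in> C) \<and>
     (\<forall>x\<in>C. \<forall>y\<in>C. br x y \<in> C) \<and>
     (\<forall>x\<in>C. \<forall>y\<in>C. \<forall>w\<in>C. add (add x y) w = add x (add y w)) \<and>
     (\<forall>x\<in>C. \<forall>y\<in>C. add x y = add y x) \<and>
     (\<forall>x\<in>C. add x z = x) \<and>
     (\<forall>x\<in>C. add x (ng x) = z) \<and>
     (\<forall>x\<in>C. sm 1 x = x) \<and>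
     (\<forall>r s. \<forall>x\<in>C. sm (r * s) x = sm r (sm s x)) \<and>
     (\<forall>r s. \<forall>x\<in>C. sm (r + s) x = add (sm r x) (sm s x)) \<and>
     (\<forall>r. \<forall>x\<in>C. \<forall>y\<in>C. sm r (add x y) = add (sm r x) (sm r y)) \<and>
     (\<forall>x\<in>C. \<forall>y\<in>C. \<forall>w\<in>C. br (add x y) w = add (br x w) (br y w)) \<and>
     (\<forall>x\<in>C. \<forall>y\<in>C. \<forall>w\<in>C. br w (add x y) = add (br w x) (br w y)) \<and>
     (\<forall>r. \<forall>x\<in>C. \<forall>y\<in>C. br (sm r x) y = sm r (br x y)) \<and>
     (\<forall>r. \<forall>x\<in>C. \<forall>y\<in>C. br x (sm r y) = sm r (br x y)) \<and>
     (\<forall>x\<in>C. br x x = z) \<and>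
     (\<forall>x\<in>C. \<forall>y\<in>C. \<forall>w\<in>C.
        add (br x (br y w)) (add (br y (br w x)) (br w (br x y))) = z))"

definition lie_ideal :: "('r::comm_ring_1, 'a) lie_alg \<Rightarrow> 'a set \<Rightarrow> bool" where
  "lie_ideal L H \<longleftrightarrow>
     H \<subseteq> lcarrier L \<and> lzero L \<in> H \<and>
     (\<forall>x\<in>H. \<forall>y\<in>H. ladd L x y \<in> H) \<and>
     (\<forall>x\<in>H. lneg L x \<in> H) \<and>
     (\<forall>r. \<forall>x\<in>H. lsmul L r x \<in> H) \<and>
     (\<forall>x\<in>lcarrier L. \<forall>h\<in>H. lbr L x h \<in> H)"

definition lcoset :: "('r, 'a) lie_alg \<Rightarrow> 'a set \<Rightarrow> 'a \<Rightarrow> 'a set" where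
  "lcoset L H x = {ladd L x h | h. h \<in> H}"

definition crep :: "'a set \<Rightarrow> 'a" where
  "crep A = (SOME a. a \<in> A)"

definition quotient_lie :: "('r, 'a) lie_alg \<Rightarrow> 'a set \<Rightarrow> ('r, 'a set) lie_alg" where
  "quotient_lie L H =
    \<lparr> lcarrier = lcoset L H ` lcarrier L,
      lzero = lcoset L H (lzero L),
      ladd = (\<lambda>A B. lcoset L H (ladd L (crep A) (crep B))),
      lneg = (\<lambda>A. lcoset L H (lneg L (crep A))),
      lsmul = (\<lambda>r A. lcoset L H (lsmul L r (crep A))),
      lbr = (\<lambda>A B. lcoset L H (lbr L (crep A) (crep B))) \<rparr>"

datatype ('r, 'x) lterm =
  Gen 'x | LZero | LAdd "('r, 'x) lterm" "('r, 'x) lterm" | LNeg "('r, 'x) lterm"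
  | LSmul 'r "('r, 'x) lterm" | LBr "('r, 'x) lterm" "('r, 'x) lterm"

primrec lgens :: "('r, 'x) lterm \<Rightarrow> 'x set" where
  "lgens (Gen x) = {x}"
| "lgens LZero = {}"
| "lgens (LAdd a b) = lgens a \<union> lgens b"
| "lgens (LNeg a) = lgens a"
| "lgens (LSmul r a) = lgens a"
| "lgens (LBr a b) = lgens a \<union> lgens b"

inductive lcong :: "(('r::comm_ring_1, 'x) lterm \<times> ('r, 'x) lterm) set
    \<Rightarrow> ('r, 'x) lterm \<Rightarrow> ('r, 'x) lterm \<Rightarrow> bool" for R where
  rel: "(s, t) \<in> R \<Longrightarrow> lcong R s t"
| refl: "lcong R t t"
| sym: "lcong R s t \<Longrightarrow> lcong R t s"
| trans: "lcong R s t \<Longrightarrow> lcong R t u \<Longrightarrow> lcong R s u"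
| cAdd: "lcong R a a' \<Longrightarrow> lcong R b b' \<Longrightarrow> lcong R (LAdd a b) (LAdd a' b')"
| cNeg: "lcong R a a' \<Longrightarrow> lcong R (LNeg a) (LNeg a')"
| cSmul: "lcong R a a' \<Longrightarrow> lcong R (LSmul r a) (LSmul r a')"
| cBr: "lcong R a a' \<Longrightarrow> lcong R b b' \<Longrightarrow> lcong R (LBr a b) (LBr a' b')"
| add_assoc: "lcong R (LAdd (LAdd a b) c) (LAdd a (LAdd b c))"
| add_comm: "lcong R (LAdd a b) (LAdd b a)"
| add_zero: "lcong R (LAdd a LZero) a"
| add_neg: "lcong R (LAdd a (LNeg a)) LZero"
| smul_one: "lcong R (LSmul 1 a) a"
| smul_mult: "lcong R (LSmul (r * s) a) (LSmul r (LSmul s a))"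
| smul_add_s: "lcong R (LSmul (r + s) a) (LAdd (LSmul r a) (LSmul s a))"
| smul_add_v: "lcong R (LSmul r (LAdd a b)) (LAdd (LSmul r a) (LSmul r b))"
| br_add_l: "lcong R (LBr (LAdd a b) c) (LAdd (LBr a c) (LBr b c))"
| br_add_r: "lcong R (LBr c (LAdd a b)) (LAdd (LBr c a) (LBr c b))"
| br_smul_l: "lcong R (LBr (LSmul r a) b) (LSmul r (LBr a b))"
| br_smul_r: "lcong R (LBr a (LSmul r b)) (LSmul r (LBr a b))"
| br_alt: "lcong R (LBr a a) LZero"
| jacobi: "lcong R (LAdd (LBr a (LBr b c)) (LAdd (LBr b (LBr c a)) (LBr c (LBr a b)))) LZero"

definition pclass :: "(('r::comm_ring_1, 'x) lterm \<times> ('r, 'x) lterm) set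
    \<Rightarrow> ('r, 'x) lterm \<Rightarrow> ('r, 'x) lterm set" where
  "pclass R t = {s. lcong R t s}"

definition presented :: "('x \<Rightarrow> bool) \<Rightarrow> (('r::comm_ring_1, 'x) lterm \<times> ('r, 'x) lterm) set
    \<Rightarrow> ('r, ('r, 'x) lterm set) lie_alg" where
  "presented P R =
    \<lparr> lcarrier = {pclass R t | t. \<forall>x\<in>lgens t. P x},
      lzero = pclass R LZero,
      ladd = (\<lambda>A B. pclass R (LAdd (crep A) (crep B))),
      lneg = (\<lambda>A. pclass R (LNeg (crep A))),
      lsmul = (\<lambda>r A. pclass R (LSmul r (crep A))),
      lbr = (\<lambda>A B. pclass R (LBr (crep A) (crep B))) \<rparr>"

primrec lterm_map :: "('x \<Rightarrow> ('r, 'y) lterm) \<Rightarrow> ('r, 'x) lterm \<Rightarrow> ('r, 'y) lterm" where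
  "lterm_map f (Gen x) = f x"
| "lterm_map f LZero = LZero"
| "lterm_map f (LAdd a b) = LAdd (lterm_map f a) (lterm_map f b)"
| "lterm_map f (LNeg a) = LNeg (lterm_map f a)"
| "lterm_map f (LSmul r a) = LSmul r (lterm_map f a)"
| "lterm_map f (LBr a b) = LBr (lterm_map f a) (lterm_map f b)"

definition induced_map :: "(('r::comm_ring_1, 'y) lterm \<times> ('r, 'y) lterm) set
    \<Rightarrow> ('x \<Rightarrow> ('r, 'y) lterm) \<Rightarrow> ('r, 'x) lterm set \<Rightarrow> ('r, 'y) lterm set" where
  "induced_map R' f A = pclass R' (lterm_map f (crep A))"

text \<open>Tns h g stands for h \<otimes> g, Brc h for {h}.\<close>
datatype 'a tgen = Tns 'a 'a | Brc 'a

definition tgen_ok :: "('r, 'a) lie_alg \<Rightarrow> 'a set \<Rightarrow> nat \<Rightarrow> 'a tgen \<Rightarrow> bool" where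
  "tgen_ok L H q x = (case x of Tns h g \<Rightarrow> h \<in> H \<and> g \<in> lcarrier L
                               | Brc h \<Rightarrow> q \<ge> 1 \<and> h \<in> H)"

definition tensor_rels :: "('r::comm_ring_1, 'a) lie_alg \<Rightarrow> 'a set \<Rightarrow> nat
    \<Rightarrow> (('r, 'a tgen) lterm \<times> ('r, 'a tgen) lterm) set" where
  "tensor_rels L H q =
   (let C = lcarrier L; add = ladd L; sub = (\<lambda>x y. ladd L x (lneg L y)); sm = lsmul L; br = lbr L;
        T = (\<lambda>h g. Gen (Tns h g)); B = (\<lambda>h. Gen (Brc h)); qm = (\<lambda>x. lsmul L (of_nat q) x);
        tsub = (\<lambda>a b. LAdd a (LNeg b)) in
    {(LSmul r (T h g), T (sm r h) g) | r h g. h \<in> H \<and> g \<in> C} \<union>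
    {(LSmul r (T h g), T h (sm r g)) | r h g. h \<in> H \<and> g \<in> C} \<union>
    {(T (add h h') g, LAdd (T h g) (T h' g)) | h h' g. h \<in> H \<and> h' \<in> H \<and> g \<in> C} \<union>
    {(T h (add g g'), LAdd (T h g) (T h g')) | h g g'. h \<in> H \<and> g \<in> C \<and> g' \<in> C} \<union>
    {(T (br h h') g, tsub (T h (br h' g)) (T h' (br h g))) | h h' g. h \<in> H \<and> h' \<in> H \<and> g \<in> C} \<union>
    {(T h (br g g'), tsub (T (br g' h) g) (T (br g h) g')) | h g g'. h \<in> H \<and> g \<in> C \<and> g' \<in> C} \<union>
    {(LBr (T h g) (T h' g'), T (br h g) (br h' g')) | h g h' g'.
        h \<in> H \<and> g \<in> C \<and> h' \<in> H \<and> g' \<in> C} \<union>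
    (if q = 0 then {} else
    {(LBr (B h') (T h g), LAdd (T (br (qm h') h) g) (T h (br (qm h') g))) | h' h g.
        h' \<in> H \<and> h \<in> H \<and> g \<in> C} \<union>
    {(B (add (sm r h) (sm r' h')), LAdd (LSmul r (B h)) (LSmul r' (B h'))) | r r' h h'.
        h \<in> H \<and> h' \<in> H} \<union>
    {(LBr (B h) (B h'), T (qm h) (qm h')) | h h'. h \<in> H \<and> h' \<in> H} \<union>
    {(B (br h g), LSmul (of_nat q) (T h g)) | h g. h \<in> H \<and> g \<in> C}))"

definition exterior_rels :: "('r::comm_ring_1, 'a) lie_alg \<Rightarrow> 'a set \<Rightarrow> nat
    \<Rightarrow> (('r, 'a tgen) lterm \<times> ('r, 'a tgen) lterm) set" where
  "exterior_rels L H q = tensor_rels L H q \<union> {(Gen (Tns h h), LZero) | h. h \<in> H}"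

definition tensor_q :: "('r::comm_ring_1, 'a) lie_alg \<Rightarrow> 'a set \<Rightarrow> nat
    \<Rightarrow> ('r, ('r, 'a tgen) lterm set) lie_alg" where
  "tensor_q L H q = presented (tgen_ok L H q) (tensor_rels L H q)"

definition exterior_q :: "('r::comm_ring_1, 'a) lie_alg \<Rightarrow> 'a set \<Rightarrow> nat
    \<Rightarrow> ('r, ('r, 'a tgen) lterm set) lie_alg" where
  "exterior_q L H q = presented (tgen_ok L H q) (exterior_rels L H q)"

definition ext_incl :: "('r::comm_ring_1, 'a) lie_alg \<Rightarrow> nat
    \<Rightarrow> ('r, 'a tgen) lterm set \<Rightarrow> ('r, 'a tgen) lterm set" where
  "ext_incl L q = induced_map (exterior_rels L (lcarrier L) q) Gen"

definition ext_proj :: "('r::comm_ring_1, 'a) lie_alg \<Rightarrow> 'a set \<Rightarrow> nat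
    \<Rightarrow> ('r, 'a tgen) lterm set \<Rightarrow> ('r, 'a set tgen) lterm set" where
  "ext_proj L H q =
     (let Q = quotient_lie L H in
      induced_map (exterior_rels Q (lcarrier Q) q)
        (\<lambda>x. Gen (case x of Tns g g' \<Rightarrow> Tns (lcoset L H g) (lcoset L H g')
                         | Brc g \<Rightarrow> Brc (lcoset L H g))))"

end

theory Submission
  imports Defs
begin


declare lcong.trans[trans]

lemma lc_add_l: "lcong R a a' \<Longrightarrow> lcong R (LAdd a b) (LAdd a' b)"
  by (rule lcong.cAdd) (auto intro: lcong.refl)
lemma lc_add_r: "lcong R b b' \<Longrightarrow> lcong R (LAdd a b) (LAdd a b')"
  by (rule lcong.cAdd) (auto intro: lcong.refl)
lemma lc_br_l: "lcong R a a' \<Longrightarrow> lcong R (LBr a b) (LBr a' b)"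
  by (rule lcong.cBr) (auto intro: lcong.refl)
lemma lc_br_r: "lcong R b b' \<Longrightarrow> lcong R (LBr a b) (LBr a b')"
  by (rule lcong.cBr) (auto intro: lcong.refl)

lemma lc_zero_l: "lcong R (LAdd LZero a) a"
  by (meson lcong.add_comm lcong.add_zero lcong.trans)

lemma lc_assoc_sym: "lcong R (LAdd a (LAdd b c)) (LAdd (LAdd a b) c)"
  by (rule lcong.sym, rule lcong.add_assoc)

lemma lc_swap_mid: "lcong R (LAdd (LAdd a b) (LAdd c d)) (LAdd (LAdd a c) (LAdd b d))"
proof -
  have "lcong R (LAdd (LAdd a b) (LAdd c d)) (LAdd a (LAdd b (LAdd c d)))" by (rule lcong.add_assoc)
  also have "lcong R \<dots> (LAdd a (LAdd (LAdd b c) d))" by (intro lc_add_r lc_assoc_sym)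
  also have "lcong R \<dots> (LAdd a (LAdd (LAdd c b) d))" by (intro lc_add_r lc_add_l lcong.add_comm)
  also have "lcong R \<dots> (LAdd a (LAdd c (LAdd b d)))" by (intro lc_add_r lcong.add_assoc)
  also have "lcong R \<dots> (LAdd (LAdd a c) (LAdd b d))" by (rule lc_assoc_sym)
  finally show ?thesis .
qed

lemma lc_swap_last: "lcong R (LAdd (LAdd a b) c) (LAdd (LAdd a c) b)"
proof -
  have "lcong R (LAdd (LAdd a b) c) (LAdd a (LAdd b c))" by (rule lcong.add_assoc)
  also have "lcong R \<dots> (LAdd a (LAdd c b))" by (intro lc_add_r lcong.add_comm)
  also have "lcong R \<dots> (LAdd (LAdd a c) b)" by (rule lc_assoc_sym)
  finally show ?thesis .
qed

lemma lc_anti: assumes "lcong R (LAdd a b) LZero" shows "lcong R a (LNeg b)"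
proof -
  have "lcong R a (LAdd a LZero)" by (rule lcong.sym, rule lcong.add_zero)
  also have "lcong R \<dots> (LAdd a (LAdd b (LNeg b)))" by (rule lc_add_r, rule lcong.sym, rule lcong.add_neg)
  also have "lcong R \<dots> (LAdd (LAdd a b) (LNeg b))" by (rule lc_assoc_sym)
  also have "lcong R \<dots> (LAdd LZero (LNeg b))" by (intro lc_add_l assms)
  also have "lcong R \<dots> (LNeg b)" by (rule lc_zero_l)
  finally show ?thesis .
qed

lemma lc_selfzero: assumes "lcong R a (LAdd a a)" shows "lcong R a LZero"
proof -
  have "lcong R LZero (LAdd a (LNeg a))" by (rule lcong.sym, rule lcong.add_neg)
  also have "lcong R \<dots> (LAdd (LAdd a a) (LNeg a))" by (intro lc_add_l assms)
  also have "lcong R \<dots> (LAdd a (LAdd a (LNeg a)))" by (rule lcong.add_assoc)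
  also have "lcong R \<dots> (LAdd a LZero)" by (intro lc_add_r lcong.add_neg)
  also have "lcong R \<dots> a" by (rule lcong.add_zero)
  finally show ?thesis by (rule lcong.sym)
qed

lemma lc_neg_add: "lcong R (LNeg (LAdd a b)) (LAdd (LNeg a) (LNeg b))"
proof -
  have "lcong R (LAdd (LAdd (LNeg a) (LNeg b)) (LAdd a b)) (LAdd (LAdd (LNeg a) a) (LAdd (LNeg b) b))"
    by (rule lc_swap_mid)
  also have "lcong R \<dots> (LAdd LZero LZero)"
    by (intro lcong.cAdd; meson lcong.add_comm lcong.add_neg lcong.trans)
  also have "lcong R \<dots> LZero" by (rule lcong.add_zero)
  finally have "lcong R (LAdd (LNeg a) (LNeg b)) (LNeg (LAdd a b))" by (rule lc_anti)
  then show ?thesis by (rule lcong.sym)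
qed

lemma lc_br_zero_r: "lcong R (LBr a LZero) LZero"
proof (rule lc_selfzero)
  have "lcong R (LBr a LZero) (LBr a (LAdd LZero LZero))" by (rule lc_br_r, rule lcong.sym, rule lcong.add_zero)
  also have "lcong R \<dots> (LAdd (LBr a LZero) (LBr a LZero))" by (rule lcong.br_add_r)
  finally show "lcong R (LBr a LZero) (LAdd (LBr a LZero) (LBr a LZero))" .
qed

lemma lc_br_zero_l: "lcong R (LBr LZero a) LZero"
proof (rule lc_selfzero)
  have "lcong R (LBr LZero a) (LBr (LAdd LZero LZero) a)" by (rule lc_br_l, rule lcong.sym, rule lcong.add_zero)
  also have "lcong R \<dots> (LAdd (LBr LZero a) (LBr LZero a))" by (rule lcong.br_add_l)
  finally show "lcong R (LBr LZero a) (LAdd (LBr LZero a) (LBr LZero a))" .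
qed

lemma lc_smul_zero: "lcong R (LSmul r LZero) LZero"
proof (rule lc_selfzero)
  have "lcong R (LSmul r LZero) (LSmul r (LAdd LZero LZero))" by (rule lcong.cSmul, rule lcong.sym, rule lcong.add_zero)
  also have "lcong R \<dots> (LAdd (LSmul r LZero) (LSmul r LZero))" by (rule lcong.smul_add_v)
  finally show "lcong R (LSmul r LZero) (LAdd (LSmul r LZero) (LSmul r LZero))" .
qed

lemma lc_neg_zero: "lcong R (LNeg LZero) LZero"
  by (meson lc_zero_l lcong.add_neg lcong.sym lcong.trans)

lemma lc_br_anti: "lcong R (LBr a b) (LNeg (LBr b a))"
proof (rule lc_anti)
  have "lcong R LZero (LBr (LAdd a b) (LAdd a b))" by (rule lcong.sym, rule lcong.br_alt)
  also have "lcong R \<dots> (LAdd (LBr a (LAdd a b)) (LBr b (LAdd a b)))" by (rule lcong.br_add_l)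
  also have "lcong R \<dots> (LAdd (LAdd (LBr a a) (LBr a b)) (LAdd (LBr b a) (LBr b b)))"
    by (intro lcong.cAdd lcong.br_add_r)
  also have "lcong R \<dots> (LAdd (LAdd LZero (LBr a b)) (LAdd (LBr b a) LZero))"
    by (intro lcong.cAdd lcong.br_alt lcong.refl)
  also have "lcong R \<dots> (LAdd (LBr a b) (LBr b a))"
    by (intro lcong.cAdd lc_zero_l lcong.add_zero)
  finally show "lcong R (LAdd (LBr a b) (LBr b a)) LZero" by (rule lcong.sym)
qed

lemma lc_br_neg_r: "lcong R (LBr a (LNeg b)) (LNeg (LBr a b))"
proof (rule lc_anti)
  have "lcong R (LAdd (LBr a (LNeg b)) (LBr a b)) (LBr a (LAdd (LNeg b) b))" by (rule lcong.sym, rule lcong.br_add_r)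
  also have "lcong R \<dots> (LBr a LZero)" by (intro lc_br_r; meson lcong.add_comm lcong.add_neg lcong.trans)
  also have "lcong R \<dots> LZero" by (rule lc_br_zero_r)
  finally show "lcong R (LAdd (LBr a (LNeg b)) (LBr a b)) LZero" .
qed

lemma lc_br_neg_l: "lcong R (LBr (LNeg a) b) (LNeg (LBr a b))"
proof (rule lc_anti)
  have "lcong R (LAdd (LBr (LNeg a) b) (LBr a b)) (LBr (LAdd (LNeg a) a) b)" by (rule lcong.sym, rule lcong.br_add_l)
  also have "lcong R \<dots> (LBr LZero b)" by (intro lc_br_l; meson lcong.add_comm lcong.add_neg lcong.trans)
  also have "lcong R \<dots> LZero" by (rule lc_br_zero_l)
  finally show "lcong R (LAdd (LBr (LNeg a) b) (LBr a b)) LZero" .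
qed

lemma lc_jacobi: "lcong R (LBr a (LBr b c)) (LNeg (LAdd (LBr b (LBr c a)) (LBr c (LBr a b))))"
  by (rule lc_anti, rule lcong.jacobi)

lemma lc_hom:
  assumes "lcong R a b" and "\<And>s t. (s, t) \<in> R \<Longrightarrow> lcong R2 (lterm_map f s) (lterm_map f t)"
  shows "lcong R2 (lterm_map f a) (lterm_map f b)"
  using assms(1) proof induction
  case (rel s t) then show ?case by (rule assms(2))
next
  case (sym s t) then show ?case by (blast intro: lcong.sym)
next
  case (trans s t u) then show ?case by (blast intro: lcong.trans)
next
  case refl then show ?case by (rule lcong.refl)
next
  case add_assoc then show ?case by (simp only: lterm_map.simps, rule lcong.add_assoc)
next
  case add_comm then show ?case by (simp only: lterm_map.simps, rule lcong.add_comm)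
next
  case add_zero then show ?case by (simp only: lterm_map.simps, rule lcong.add_zero)
next
  case add_neg then show ?case by (simp only: lterm_map.simps, rule lcong.add_neg)
next
  case smul_one then show ?case by (simp only: lterm_map.simps, rule lcong.smul_one)
next
  case smul_mult then show ?case by (simp only: lterm_map.simps, rule lcong.smul_mult)
next
  case smul_add_s then show ?case by (simp only: lterm_map.simps, rule lcong.smul_add_s)
next
  case smul_add_v then show ?case by (simp only: lterm_map.simps, rule lcong.smul_add_v)
next
  case br_add_l then show ?case by (simp only: lterm_map.simps, rule lcong.br_add_l)
next
  case br_add_r then show ?case by (simp only: lterm_map.simps, rule lcong.br_add_r)
next
  case br_smul_l then show ?case by (simp only: lterm_map.simps, rule lcong.br_smul_l)
next
  case br_smul_r then show ?case by (simp only: lterm_map.simps, rule lcong.br_smul_r)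
next
  case br_alt then show ?case by (simp only: lterm_map.simps, rule lcong.br_alt)
next
  case jacobi then show ?case by (simp only: lterm_map.simps, rule lcong.jacobi)
next
  case cAdd then show ?case by (simp, blast intro: lcong.cAdd)
next
  case cBr then show ?case by (simp, blast intro: lcong.cBr)
next
  case cNeg then show ?case by (simp, blast intro: lcong.cNeg)
next
  case cSmul then show ?case by (simp, blast intro: lcong.cSmul)
qed

lemma lterm_map_Gen: "lterm_map Gen t = t" by (induction t) auto

lemma lterm_map_comp: "lterm_map f (lterm_map g t) = lterm_map (\<lambda>x. lterm_map f (g x)) t"
  by (induction t) auto

lemma lgens_map: "lgens (lterm_map f t) = (\<Union>x\<in>lgens t. lgens (f x))"
  by (induction t) auto

lemma lterm_map_cong: "(\<And>x. x \<in> lgens t \<Longrightarrow> f x = g x) \<Longrightarrow> lterm_map f t = lterm_map g t"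
  by (induction t) auto

lemma lc_mono: "lcong R a b \<Longrightarrow> R \<subseteq> R2 \<Longrightarrow> lcong R2 a b"
  using lc_hom[of R a b R2 Gen] by (auto simp: lterm_map_Gen intro: lcong.rel)

lemma pclass_eq: "pclass R a = pclass R b \<longleftrightarrow> lcong R a b"
proof
  assume "pclass R a = pclass R b"
  moreover have "b \<in> pclass R b" unfolding pclass_def by (simp add: lcong.refl)
  ultimately have "b \<in> pclass R a" by simp
  then show "lcong R a b" unfolding pclass_def by simp
next
  assume ab: "lcong R a b"
  show "pclass R a = pclass R b" unfolding pclass_def
  proof (intro Collect_cong iffI)
    fix x assume "lcong R a x" then show "lcong R b x" using ab lcong.sym lcong.trans by blast
  next
    fix x assume "lcong R b x" then show "lcong R a x" using ab lcong.trans by blast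
  qed
qed

lemma crep_pclass: "lcong R a (crep (pclass R a))"
  unfolding crep_def pclass_def using someI[of "\<lambda>b. lcong R a b" a] lcong.refl[of R a] by simp




locale LH =
  fixes L :: "('r::comm_ring_1, 'a) lie_alg" and H :: "'a set"
  assumes LA: "lie_algebra L" and ID: "lie_ideal L H"
begin

abbreviation "C \<equiv> lcarrier L"
abbreviation "ad \<equiv> ladd L"
abbreviation "ng \<equiv> lneg L"
abbreviation "sm \<equiv> lsmul L"
abbreviation "br \<equiv> lbr L"
abbreviation "z \<equiv> lzero L"
abbreviation "cos \<equiv> lcoset L H"

lemma zC: "z \<in> C" and addC: "x \<in> C \<Longrightarrow> y \<in> C \<Longrightarrow> ad x y \<in> C"
  and negC: "x \<in> C \<Longrightarrow> ng x \<in> C" and smC: "x \<in> C \<Longrightarrow> sm r x \<in> C"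
  and brC: "x \<in> C \<Longrightarrow> y \<in> C \<Longrightarrow> br x y \<in> C"
  and assoc: "x \<in> C \<Longrightarrow> y \<in> C \<Longrightarrow> w \<in> C \<Longrightarrow> ad (ad x y) w = ad x (ad y w)"
  and comm: "x \<in> C \<Longrightarrow> y \<in> C \<Longrightarrow> ad x y = ad y x"
  and add0: "x \<in> C \<Longrightarrow> ad x z = x"
  and addneg: "x \<in> C \<Longrightarrow> ad x (ng x) = z"
  and sm1: "x \<in> C \<Longrightarrow> sm 1 x = x"
  and smadd: "x \<in> C \<Longrightarrow> y \<in> C \<Longrightarrow> sm r (ad x y) = ad (sm r x) (sm r y)"
  and bradd_l: "x \<in> C \<Longrightarrow> y \<in> C \<Longrightarrow> w \<in> C \<Longrightarrow> br (ad x y) w = ad (br x w) (br y w)"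
  and bradd_r: "x \<in> C \<Longrightarrow> y \<in> C \<Longrightarrow> w \<in> C \<Longrightarrow> br w (ad x y) = ad (br w x) (br w y)"
  and brsm_l: "x \<in> C \<Longrightarrow> y \<in> C \<Longrightarrow> br (sm r x) y = sm r (br x y)"
  and bralt: "x \<in> C \<Longrightarrow> br x x = z"
  using LA unfolding lie_algebra_def Let_def by auto

lemma HC: "H \<subseteq> C" and zH: "z \<in> H" and addH: "x \<in> H \<Longrightarrow> y \<in> H \<Longrightarrow> ad x y \<in> H"
  and negH: "x \<in> H \<Longrightarrow> ng x \<in> H" and smH: "x \<in> H \<Longrightarrow> sm r x \<in> H"
  and brH: "x \<in> C \<Longrightarrow> h \<in> H \<Longrightarrow> br x h \<in> H"
  using ID unfolding lie_ideal_def by auto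

lemma HC': "x \<in> H \<Longrightarrow> x \<in> C" using HC by auto

lemma add0l: "x \<in> C \<Longrightarrow> ad z x = x" by (metis add0 comm zC)

lemma antiL: assumes "a \<in> C" "b \<in> C" "ad a b = z" shows "a = ng b"
proof -
  have "a = ad a (ad b (ng b))" using assms by (simp add: addneg add0)
  also have "\<dots> = ad z (ng b)" using assms by (metis assoc negC)
  finally show ?thesis using assms by (simp add: add0l negC)
qed

lemma br_anti: assumes "x \<in> C" "y \<in> C" shows "br x y = ng (br y x)"
proof (rule antiL)
  have "z = br (ad x y) (ad x y)" using assms by (simp add: bralt addC)
  also have "\<dots> = ad (ad (br x x) (br x y)) (ad (br y x) (br y y))"
    using assms bradd_l[of x y "ad x y"] bradd_r[of x y x] bradd_r[of x y y] addC by simp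
  also have "\<dots> = ad (br x y) (br y x)" using assms by (simp add: bralt add0 add0l brC)
  finally show "ad (br x y) (br y x) = z" by simp
qed (use assms brC in auto)

lemma brH': "h \<in> H \<Longrightarrow> y \<in> C \<Longrightarrow> br h y \<in> H"
proof -
  assume a: "h \<in> H" "y \<in> C"
  then have "br h y = ng (br y h)" using br_anti HC' by blast
  then show ?thesis using a brH negH by simp
qed

lemma cos_def': "cos x = {ad x h | h. h \<in> H}" by (simp add: lcoset_def)

lemma cos_self: "x \<in> C \<Longrightarrow> x \<in> cos x"
  unfolding cos_def' using zH add0 by force

lemma cos_sub: "x \<in> C \<Longrightarrow> cos x \<subseteq> C"
  unfolding cos_def' using HC addC by auto

lemma cos_eq: assumes "x \<in> C" "h \<in> H" shows "cos (ad x h) = cos x"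
proof
  show "cos (ad x h) \<subseteq> cos x"
    unfolding cos_def' using assms by (auto simp: assoc HC' intro!: addH)
  show "cos x \<subseteq> cos (ad x h)"
  proof
    fix y assume "y \<in> cos x"
    then obtain h' where h': "h' \<in> H" "y = ad x h'" unfolding cos_def' by auto
    have "ad (ad x h) (ad (ng h) h') = ad x (ad (ad h (ng h)) h')"
      using assms h' by (simp add: assoc HC' negC addC)
    also have "\<dots> = y" using assms h' by (simp add: addneg HC' add0l)
    finally have "y = ad (ad x h) (ad (ng h) h')" by simp
    moreover have "ad (ng h) h' \<in> H" using h' assms by (auto intro!: addH negH)
    ultimately show "y \<in> cos (ad x h)" unfolding cos_def' by blast
  qed
qed

lemma cos_mem_eq: "x \<in> C \<Longrightarrow> y \<in> cos x \<Longrightarrow> cos y = cos x"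
proof -
  assume a: "x \<in> C" "y \<in> cos x"
  then obtain h where "h \<in> H" "y = ad x h" unfolding cos_def' by blast
  then show ?thesis using cos_eq a by simp
qed

lemma crep_cos: "x \<in> C \<Longrightarrow> crep (cos x) \<in> cos x"
  unfolding crep_def using cos_self by (meson someI)

lemma crep_cosC: "x \<in> C \<Longrightarrow> crep (cos x) \<in> C"
  using crep_cos cos_sub by blast

lemma cos_crep: "x \<in> C \<Longrightarrow> cos (crep (cos x)) = cos x"
  using crep_cos cos_mem_eq by blast

lemma cos_eqD: "x \<in> C \<Longrightarrow> y \<in> C \<Longrightarrow> cos x = cos y \<Longrightarrow> \<exists>h\<in>H. y = ad x h"
  using cos_self[of y] unfolding cos_def' by auto

lemma cos_add_l: assumes "x \<in> C" "x' \<in> C" "y \<in> C" "cos x = cos x'"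
  shows "cos (ad x y) = cos (ad x' y)"
proof -
  obtain h where h: "h \<in> H" "x' = ad x h" using cos_eqD assms by blast
  have "ad x' y = ad (ad x y) h" using assms h by (metis assoc comm HC')
  thus ?thesis using cos_eq h assms addC by simp
qed

lemma cos_add_r: "x \<in> C \<Longrightarrow> x' \<in> C \<Longrightarrow> y \<in> C \<Longrightarrow> cos x = cos x' \<Longrightarrow> cos (ad y x) = cos (ad y x')"
  using cos_add_l by (metis comm)

lemma cos_sm: assumes "x \<in> C" "x' \<in> C" "cos x = cos x'"
  shows "cos (sm r x) = cos (sm r x')"
proof -
  obtain h where h: "h \<in> H" "x' = ad x h" using cos_eqD assms by blast
  have "sm r x' = ad (sm r x) (sm r h)" using assms h by (simp add: smadd HC')
  thus ?thesis using cos_eq h assms smC smH by simp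
qed

lemma cos_br_l: assumes "x \<in> C" "x' \<in> C" "y \<in> C" "cos x = cos x'"
  shows "cos (br x y) = cos (br x' y)"
proof -
  obtain h where h: "h \<in> H" "x' = ad x h" using cos_eqD assms by blast
  have "br x' y = ad (br x y) (br h y)" using assms h by (simp add: bradd_l HC')
  thus ?thesis using cos_eq h assms brC brH' by simp
qed

lemma cos_br_r: assumes "x \<in> C" "x' \<in> C" "y \<in> C" "cos x = cos x'"
  shows "cos (br y x) = cos (br y x')"
proof -
  obtain h where h: "h \<in> H" "x' = ad x h" using cos_eqD assms by blast
  have "br y x' = ad (br y x) (br y h)" using assms h by (simp add: bradd_r HC')
  thus ?thesis using cos_eq h assms brC brH by simp
qed

abbreviation "Q \<equiv> quotient_lie L H"

lemma Q_carrier: "lcarrier Q = cos ` C" by (simp add: quotient_lie_def)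
lemma Q_zero: "lzero Q = cos z" by (simp add: quotient_lie_def)

lemma Q_add: "x \<in> C \<Longrightarrow> y \<in> C \<Longrightarrow> ladd Q (cos x) (cos y) = cos (ad x y)"
proof -
  assume a: "x \<in> C" "y \<in> C"
  have "cos (ad (crep (cos x)) (crep (cos y))) = cos (ad x (crep (cos y)))"
    using a by (intro cos_add_l crep_cosC cos_crep)
  also have "\<dots> = cos (ad x y)" using a by (intro cos_add_r crep_cosC cos_crep)
  finally show ?thesis unfolding quotient_lie_def by simp
qed

lemma Q_sm: "x \<in> C \<Longrightarrow> lsmul Q r (cos x) = cos (sm r x)"
proof -
  assume a: "x \<in> C"
  have "cos (sm r (crep (cos x))) = cos (sm r x)"
    using a by (intro cos_sm crep_cosC cos_crep)
  then show ?thesis unfolding quotient_lie_def by simp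
qed

lemma Q_br: "x \<in> C \<Longrightarrow> y \<in> C \<Longrightarrow> lbr Q (cos x) (cos y) = cos (br x y)"
proof -
  assume a: "x \<in> C" "y \<in> C"
  have "cos (br (crep (cos x)) (crep (cos y))) = cos (br x (crep (cos y)))"
    using a by (intro cos_br_l crep_cosC cos_crep)
  also have "\<dots> = cos (br x y)" using a by (intro cos_br_r crep_cosC cos_crep)
  finally show ?thesis unfolding quotient_lie_def by simp
qed

lemma cos_H: "h \<in> H \<Longrightarrow> cos h = cos z"
  using cos_eq[of z h] by (simp add: add0l HC' zC)

end



abbreviation TT where "TT h g \<equiv> Gen (Tns h g)"
abbreviation BB where "BB h \<equiv> Gen (Brc h)"

context fixes L :: "('r::comm_ring_1, 'a) lie_alg" and H :: "'a set" and q :: nat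
begin

abbreviation "RR \<equiv> exterior_rels L H q"
abbreviation "CL \<equiv> lcarrier L"
abbreviation "qm x \<equiv> lsmul L (of_nat q) x"

lemma rel1: "h \<in> H \<Longrightarrow> g \<in> CL \<Longrightarrow> (LSmul r (TT h g), TT (lsmul L r h) g) \<in> RR"
  unfolding exterior_rels_def tensor_rels_def Let_def by simp
lemma rel2: "h \<in> H \<Longrightarrow> g \<in> CL \<Longrightarrow> (LSmul r (TT h g), TT h (lsmul L r g)) \<in> RR"
  unfolding exterior_rels_def tensor_rels_def Let_def by simp
lemma rel3: "h \<in> H \<Longrightarrow> h' \<in> H \<Longrightarrow> g \<in> CL \<Longrightarrow> (TT (ladd L h h') g, LAdd (TT h g) (TT h' g)) \<in> RR"
  unfolding exterior_rels_def tensor_rels_def Let_def by simp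
lemma rel4: "h \<in> H \<Longrightarrow> g \<in> CL \<Longrightarrow> g' \<in> CL \<Longrightarrow> (TT h (ladd L g g'), LAdd (TT h g) (TT h g')) \<in> RR"
  unfolding exterior_rels_def tensor_rels_def Let_def by simp
lemma rel5: "h \<in> H \<Longrightarrow> h' \<in> H \<Longrightarrow> g \<in> CL \<Longrightarrow>
   (TT (lbr L h h') g, LAdd (TT h (lbr L h' g)) (LNeg (TT h' (lbr L h g)))) \<in> RR"
  unfolding exterior_rels_def tensor_rels_def Let_def by simp
lemma rel6: "h \<in> H \<Longrightarrow> g \<in> CL \<Longrightarrow> g' \<in> CL \<Longrightarrow>
   (TT h (lbr L g g'), LAdd (TT (lbr L g' h) g) (LNeg (TT (lbr L g h) g'))) \<in> RR"
  unfolding exterior_rels_def tensor_rels_def Let_def by simp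
lemma rel7: "h \<in> H \<Longrightarrow> g \<in> CL \<Longrightarrow> h' \<in> H \<Longrightarrow> g' \<in> CL \<Longrightarrow>
   (LBr (TT h g) (TT h' g'), TT (lbr L h g) (lbr L h' g')) \<in> RR"
  unfolding exterior_rels_def tensor_rels_def Let_def by simp
lemma rel8: "q \<noteq> 0 \<Longrightarrow> h' \<in> H \<Longrightarrow> h \<in> H \<Longrightarrow> g \<in> CL \<Longrightarrow>
   (LBr (BB h') (TT h g), LAdd (TT (lbr L (qm h') h) g) (TT h (lbr L (qm h') g))) \<in> RR"
  unfolding exterior_rels_def tensor_rels_def Let_def by simp
lemma rel9: "q \<noteq> 0 \<Longrightarrow> h \<in> H \<Longrightarrow> h' \<in> H \<Longrightarrow>
   (BB (ladd L (lsmul L r h) (lsmul L r' h')), LAdd (LSmul r (BB h)) (LSmul r' (BB h'))) \<in> RR"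
  unfolding exterior_rels_def tensor_rels_def Let_def by simp
lemma rel10: "q \<noteq> 0 \<Longrightarrow> h \<in> H \<Longrightarrow> h' \<in> H \<Longrightarrow>
   (LBr (BB h) (BB h'), TT (qm h) (qm h')) \<in> RR"
  unfolding exterior_rels_def tensor_rels_def Let_def by simp
lemma rel11: "q \<noteq> 0 \<Longrightarrow> h \<in> H \<Longrightarrow> g \<in> CL \<Longrightarrow>
   (BB (lbr L h g), LSmul (of_nat q) (TT h g)) \<in> RR"
  unfolding exterior_rels_def tensor_rels_def Let_def by simp
lemma rel12: "h \<in> H \<Longrightarrow> (TT h h, LZero) \<in> RR"
  unfolding exterior_rels_def by blast

lemma rels_cases:
  assumes "(s, t) \<in> RR"
  obtains
    (R1) r h g where "s = LSmul r (TT h g)" "t = TT (lsmul L r h) g" "h \<in> H" "g \<in> CL"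
  | (R2) r h g where "s = LSmul r (TT h g)" "t = TT h (lsmul L r g)" "h \<in> H" "g \<in> CL"
  | (R3) h h' g where "s = TT (ladd L h h') g" "t = LAdd (TT h g) (TT h' g)" "h \<in> H" "h' \<in> H" "g \<in> CL"
  | (R4) h g g' where "s = TT h (ladd L g g')" "t = LAdd (TT h g) (TT h g')" "h \<in> H" "g \<in> CL" "g' \<in> CL"
  | (R5) h h' g where "s = TT (lbr L h h') g" "t = LAdd (TT h (lbr L h' g)) (LNeg (TT h' (lbr L h g)))"
       "h \<in> H" "h' \<in> H" "g \<in> CL"
  | (R6) h g g' where "s = TT h (lbr L g g')" "t = LAdd (TT (lbr L g' h) g) (LNeg (TT (lbr L g h) g'))"
       "h \<in> H" "g \<in> CL" "g' \<in> CL"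
  | (R7) h g h' g' where "s = LBr (TT h g) (TT h' g')" "t = TT (lbr L h g) (lbr L h' g')"
       "h \<in> H" "g \<in> CL" "h' \<in> H" "g' \<in> CL"
  | (R8) h' h g where "0 < q" "s = LBr (BB h') (TT h g)"
       "t = LAdd (TT (lbr L (qm h') h) g) (TT h (lbr L (qm h') g))" "h' \<in> H" "h \<in> H" "g \<in> CL"
  | (R9) r r' h h' where "0 < q" "s = BB (ladd L (lsmul L r h) (lsmul L r' h'))"
       "t = LAdd (LSmul r (BB h)) (LSmul r' (BB h'))" "h \<in> H" "h' \<in> H"
  | (R10) h h' where "0 < q" "s = LBr (BB h) (BB h')" "t = TT (qm h) (qm h')" "h \<in> H" "h' \<in> H"
  | (R11) h g where "0 < q" "s = BB (lbr L h g)" "t = LSmul (of_nat q) (TT h g)" "h \<in> H" "g \<in> CL"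
  | (R12) h where "s = TT h h" "t = LZero" "h \<in> H"
  using assms unfolding exterior_rels_def tensor_rels_def Let_def
proof (cases "q = 0")
  case True
  with assms show ?thesis unfolding exterior_rels_def tensor_rels_def Let_def
    apply simp
    apply (elim disjE exE conjE)
    by (rule that; assumption)+
next
  case False
  with assms show ?thesis unfolding exterior_rels_def tensor_rels_def Let_def
    apply simp
    apply (elim disjE exE conjE)
    by (rule that; assumption)+
qed

end



definition okt :: "('x \<Rightarrow> bool) \<Rightarrow> ('r, 'x) lterm \<Rightarrow> bool" where
  "okt P t \<longleftrightarrow> (\<forall>x\<in>lgens t. P x)"

lemma okt_simps[simp]: "okt P (Gen x) = P x" "okt P LZero" "okt P (LAdd a b) = (okt P a \<and> okt P b)"
  "okt P (LNeg a) = okt P a" "okt P (LSmul r a) = okt P a" "okt P (LBr a b) = (okt P a \<and> okt P b)"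
  by (auto simp: okt_def)

lemma tgen_ok_simps[simp]: "tgen_ok L H q (Tns h g) = (h \<in> H \<and> g \<in> lcarrier L)"
  "tgen_ok L H q (Brc h) = (1 \<le> q \<and> h \<in> H)"
  by (auto simp: tgen_ok_def)

locale LHq = LH L H for L :: "('r::comm_ring_1, 'a) lie_alg" and H + fixes q :: nat
begin

abbreviation "RC \<equiv> exterior_rels L C q"
abbreviation "Hok \<equiv> okt (tgen_ok L H q)"
abbreviation "Cok \<equiv> okt (tgen_ok L C q)"

lemma lcr: "(s, t) \<in> RC \<Longrightarrow> lcong RC s t" by (rule lcong.rel)

lemma Tanti: assumes "x \<in> C" "y \<in> C" shows "lcong RC (TT x y) (LNeg (TT y x))"
proof (rule lc_anti)
  have xy: "ad x y \<in> C" using assms addC by auto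
  have "lcong RC LZero (TT (ad x y) (ad x y))" by (rule lcong.sym, rule lcr, rule rel12, fact xy)
  also have "lcong RC \<dots> (LAdd (TT x (ad x y)) (TT y (ad x y)))" using assms xy by (intro lcr rel3)
  also have "lcong RC \<dots> (LAdd (LAdd (TT x x) (TT x y)) (LAdd (TT y x) (TT y y)))"
    using assms by (intro lcong.cAdd lcr rel4)
  also have "lcong RC \<dots> (LAdd (LAdd LZero (TT x y)) (LAdd (TT y x) LZero))"
    using assms by (intro lcong.cAdd lcr rel12 lcong.refl)
  also have "lcong RC \<dots> (LAdd (TT x y) (TT y x))"
    by (intro lcong.cAdd lc_zero_l lcong.add_zero)
  finally show "lcong RC (LAdd (TT x y) (TT y x)) LZero" by (rule lcong.sym)
qed

definition J where "J x \<longleftrightarrow> (\<exists>v. Hok v \<and> lcong RC x v)"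

lemma J_Hok: "Hok v \<Longrightarrow> J v" unfolding J_def using lcong.refl by blast
lemma J_cong: "lcong RC x y \<Longrightarrow> J y \<Longrightarrow> J x" unfolding J_def using lcong.trans by blast
lemma J_zero: "J LZero" by (rule J_Hok) simp
lemma J_add: "J x \<Longrightarrow> J y \<Longrightarrow> J (LAdd x y)"
  unfolding J_def by (metis lcong.cAdd okt_simps(3))
lemma J_neg: "J x \<Longrightarrow> J (LNeg x)"
  unfolding J_def by (metis lcong.cNeg okt_simps(4))
lemma J_smul: "J x \<Longrightarrow> J (LSmul r x)"
  unfolding J_def by (metis lcong.cSmul okt_simps(5))
lemma J_br: "J x \<Longrightarrow> J y \<Longrightarrow> J (LBr x y)"
  unfolding J_def by (metis lcong.cBr okt_simps(6))

abbreviation "qq x \<equiv> lsmul L (of_nat q) x"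

lemma qmC: "x \<in> C \<Longrightarrow> qq x \<in> C" by (rule smC)
lemma qmH: "x \<in> H \<Longrightarrow> qq x \<in> H" by (rule smH)

lemma J_base: assumes "tgen_ok L C q g" "tgen_ok L H q h" shows "J (LBr (Gen g) (Gen h))"
proof (cases g)
  case (Tns a b)
  note ab = Tns
  show ?thesis
  proof (cases h)
    case (Tns c d)
    with assms ab have c: "c \<in> H" "c \<in> C" "a \<in> C" "b \<in> C" "d \<in> C" using HC' by auto
    have "lcong RC (LBr (Gen g) (Gen h)) (LNeg (LBr (TT c d) (TT a b)))"
      unfolding ab Tns by (rule lc_br_anti)
    also have "lcong RC \<dots> (LNeg (TT (br c d) (br a b)))" using c by (intro lcong.cNeg lcr rel7)
    finally show ?thesis by (rule J_cong) (intro J_neg J_Hok, simp add: brH' c brC)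
  next
    case (Brc c)
    with assms ab have c: "c \<in> H" "c \<in> C" "a \<in> C" "b \<in> C" "q \<noteq> 0" using HC' by auto
    have qc: "qq c \<in> H" "qq c \<in> C" using c qmH HC' by auto
    have "lcong RC (LBr (Gen g) (Gen h)) (LNeg (LBr (BB c) (TT a b)))"
      unfolding ab Brc by (rule lc_br_anti)
    also have "lcong RC \<dots> (LNeg (LAdd (TT (br (qq c) a) b) (TT a (br (qq c) b))))"
      using c by (intro lcong.cNeg lcr rel8) auto
    also have "lcong RC \<dots> (LNeg (LAdd (TT (br (qq c) a) b) (LNeg (TT (br (qq c) b) a))))"
      using c qc by (intro lcong.cNeg lc_add_r Tanti brC)
    finally show ?thesis by (rule J_cong) (intro J_neg J_Hok, simp add: brH' c brC qc)
  qed
next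
  case (Brc a)
  note ab = Brc
  show ?thesis
  proof (cases h)
    case (Tns c d)
    with assms ab have c: "c \<in> H" "c \<in> C" "a \<in> C" "d \<in> C" "q \<noteq> 0" using HC' by auto
    have qa: "qq a \<in> C" using c qmC by auto
    have "lcong RC (LBr (Gen g) (Gen h)) (LAdd (TT (br (qq a) c) d) (TT c (br (qq a) d)))"
      unfolding ab Tns using c by (intro lcr rel8) auto
    then show ?thesis by (rule J_cong) (intro J_Hok, simp add: brH c brC qa)
  next
    case (Brc c)
    with assms ab have c: "c \<in> H" "c \<in> C" "a \<in> C" "q \<noteq> 0" using HC' by auto
    have qc: "qq c \<in> H" "qq c \<in> C" "qq a \<in> C" using c qmH qmC HC' by auto
    have "lcong RC (LBr (Gen g) (Gen h)) (TT (qq a) (qq c))"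
      unfolding ab Brc using c by (intro lcr rel10) auto
    also have "lcong RC \<dots> (LNeg (TT (qq c) (qq a)))" using qc by (intro Tanti)
    finally show ?thesis by (rule J_cong) (intro J_neg J_Hok, simp add: qc)
  qed
qed

lemma J_brr: assumes "\<And>u. Hok u \<Longrightarrow> J (LBr s u)" "J x" shows "J (LBr s x)"
proof -
  obtain v where v: "Hok v" "lcong RC x v" using assms(2) unfolding J_def by blast
  show ?thesis by (rule J_cong[OF lc_br_r[OF v(2)] assms(1)[OF v(1)]])
qed

lemma J_brl: "J (LBr s x) \<Longrightarrow> J (LBr x s)"
  by (rule J_cong[OF lc_br_anti J_neg])

lemma IL: "Cok s \<Longrightarrow> Hok u \<Longrightarrow> J (LBr s u)"
proof (induction s arbitrary: u)
  case (Gen g)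
  then have g: "tgen_ok L C q g" by simp
  show ?case using Gen(2)
  proof (induction u)
    case (Gen h) then show ?case using J_base g by simp
  next
    case LZero show ?case by (rule J_cong[OF lc_br_zero_r J_zero])
  next
    case (LAdd u1 u2)
    have h: "Hok u1" "Hok u2" using LAdd.prems by auto
    show ?case by (rule J_cong[OF lcong.br_add_r J_add[OF LAdd.IH(1)[OF h(1)] LAdd.IH(2)[OF h(2)]]])
  next
    case (LNeg u1)
    have h: "Hok u1" using LNeg.prems by auto
    show ?case by (rule J_cong[OF lc_br_neg_r J_neg[OF LNeg.IH[OF h]]])
  next
    case (LSmul r u1)
    have h: "Hok u1" using LSmul.prems by auto
    show ?case by (rule J_cong[OF lcong.br_smul_r J_smul[OF LSmul.IH[OF h]]])
  next
    case (LBr u1 u2)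
    have h: "Hok u1" "Hok u2" using LBr.prems by auto
    have 1: "J (LBr (Gen g) u2)" by (rule LBr.IH(2)[OF h(2)])
    have 2: "J (LBr (Gen g) u1)" by (rule LBr.IH(1)[OF h(1)])
    have 3: "J (LBr u2 (Gen g))" by (rule J_brl[OF 1])
    have "J (LNeg (LAdd (LBr u1 (LBr u2 (Gen g))) (LBr u2 (LBr (Gen g) u1))))"
      by (rule J_neg[OF J_add[OF J_br[OF J_Hok[OF h(1)] 3] J_br[OF J_Hok[OF h(2)] 2]]])
    then show ?case by (rule J_cong[OF lc_jacobi])
  qed
next
  case LZero show ?case by (rule J_cong[OF lc_br_zero_l J_zero])
next
  case (LAdd s1 s2)
  have s: "Cok s1" "Cok s2" using LAdd.prems by auto
  show ?case by (rule J_cong[OF lcong.br_add_l J_add[OF LAdd.IH(1)[OF s(1) LAdd.prems(2)] LAdd.IH(2)[OF s(2) LAdd.prems(2)]]])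
next
  case (LNeg s1)
  have s: "Cok s1" using LNeg.prems by auto
  show ?case by (rule J_cong[OF lc_br_neg_l J_neg[OF LNeg.IH[OF s LNeg.prems(2)]]])
next
  case (LSmul r s1)
  have s: "Cok s1" using LSmul.prems by auto
  show ?case by (rule J_cong[OF lcong.br_smul_l J_smul[OF LSmul.IH[OF s LSmul.prems(2)]]])
next
  case (LBr s1 s2)
  have s: "Cok s1" "Cok s2" using LBr.prems by auto
  have IH1: "\<And>u. Hok u \<Longrightarrow> J (LBr s1 u)" using LBr.IH(1) s(1) by blast
  have IH2: "\<And>u. Hok u \<Longrightarrow> J (LBr s2 u)" using LBr.IH(2) s(2) by blast
  have 1: "J (LBr s1 (LBr s2 u))" by (rule J_brr[OF IH1 IH2[OF LBr.prems(2)]])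
  have 2: "J (LBr s2 (LBr u s1))" by (rule J_brr[OF IH2 J_brl[OF IH1[OF LBr.prems(2)]]])
  have "J (LNeg (LNeg (LAdd (LBr s1 (LBr s2 u)) (LBr s2 (LBr u s1)))))"
    by (rule J_neg[OF J_neg[OF J_add[OF 1 2]]])
  then have "J (LNeg (LBr u (LBr s1 s2)))" by (rule J_cong[OF lcong.cNeg[OF lc_jacobi]])
  then show ?case by (rule J_cong[OF lc_br_anti])
qed

lemma IL_J: "Cok s \<Longrightarrow> J x \<Longrightarrow> J (LBr s x)"
  by (rule J_brr[OF IL])

end



lemma rels_mono: assumes "H1 \<subseteq> H2" "(s, t) \<in> exterior_rels L H1 q" shows "(s, t) \<in> exterior_rels L H2 q"
  using assms(2)
proof (cases rule: rels_cases)
  case R1 thus ?thesis using assms(1) by (auto intro: rel1)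
next case R2 thus ?thesis using assms(1) by (auto intro: rel2)
next case R3 thus ?thesis using assms(1) by (auto intro: rel3)
next case R4 thus ?thesis using assms(1) by (auto intro: rel4)
next case R5 thus ?thesis using assms(1) by (auto intro: rel5)
next case R6 thus ?thesis using assms(1) by (auto intro: rel6)
next case R7 thus ?thesis using assms(1) by (auto intro: rel7)
next case R8 thus ?thesis using assms(1) by (auto intro: rel8)
next case R9 thus ?thesis using assms(1) by (auto intro: rel9)
next case R10 thus ?thesis using assms(1) by (auto intro: rel10)
next case R11 thus ?thesis using assms(1) by (auto intro: rel11)
next case R12 thus ?thesis using assms(1) by (auto intro: rel12)
qed

context LHq
begin

definition E where "E s t \<longleftrightarrow> (\<exists>u v. Hok u \<and> Hok v \<and> lcong RC (LAdd s u) (LAdd t v))"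

lemma E_lc: "lcong RC s t \<Longrightarrow> E s t"
  unfolding E_def by (rule exI[of _ LZero], rule exI[of _ LZero]) (simp add: lc_add_l)

lemma E_refl: "E s s" by (rule E_lc, rule lcong.refl)

lemma E_sym: "E s t \<Longrightarrow> E t s"
  unfolding E_def by (blast intro: lcong.sym)

lemma E_trans: assumes "E s t" "E t w" shows "E s w"
proof -
  obtain u v where uv: "Hok u" "Hok v" "lcong RC (LAdd s u) (LAdd t v)" using assms(1) unfolding E_def by blast
  obtain u' v' where uv': "Hok u'" "Hok v'" "lcong RC (LAdd t u') (LAdd w v')" using assms(2) unfolding E_def by blast
  have "lcong RC (LAdd s (LAdd u u')) (LAdd (LAdd s u) u')" by (rule lc_assoc_sym)
  also have "lcong RC \<dots> (LAdd (LAdd t v) u')" by (rule lc_add_l[OF uv(3)])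
  also have "lcong RC \<dots> (LAdd (LAdd t u') v)" by (rule lc_swap_last)
  also have "lcong RC \<dots> (LAdd (LAdd w v') v)" by (rule lc_add_l[OF uv'(3)])
  also have "lcong RC \<dots> (LAdd w (LAdd v' v))" by (rule lcong.add_assoc)
  finally show ?thesis unfolding E_def using uv uv' by (intro exI[of _ "LAdd u u'"] exI[of _ "LAdd v' v"]) simp
qed

lemma E_add: assumes "E a a'" "E b b'" shows "E (LAdd a b) (LAdd a' b')"
proof -
  obtain u v where uv: "Hok u" "Hok v" "lcong RC (LAdd a u) (LAdd a' v)" using assms(1) unfolding E_def by blast
  obtain u' v' where uv': "Hok u'" "Hok v'" "lcong RC (LAdd b u') (LAdd b' v')" using assms(2) unfolding E_def by blast
  have "lcong RC (LAdd (LAdd a b) (LAdd u u')) (LAdd (LAdd a u) (LAdd b u'))" by (rule lc_swap_mid)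
  also have "lcong RC \<dots> (LAdd (LAdd a' v) (LAdd b' v'))" by (rule lcong.cAdd[OF uv(3) uv'(3)])
  also have "lcong RC \<dots> (LAdd (LAdd a' b') (LAdd v v'))" by (rule lc_swap_mid)
  finally show ?thesis unfolding E_def using uv uv' by (intro exI[of _ "LAdd u u'"] exI[of _ "LAdd v v'"]) simp
qed

lemma E_neg: assumes "E a a'" shows "E (LNeg a) (LNeg a')"
proof -
  obtain u v where uv: "Hok u" "Hok v" "lcong RC (LAdd a u) (LAdd a' v)" using assms(1) unfolding E_def by blast
  have "lcong RC (LAdd (LNeg a) (LNeg u)) (LNeg (LAdd a u))" by (rule lcong.sym, rule lc_neg_add)
  also have "lcong RC \<dots> (LNeg (LAdd a' v))" by (rule lcong.cNeg[OF uv(3)])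
  also have "lcong RC \<dots> (LAdd (LNeg a') (LNeg v))" by (rule lc_neg_add)
  finally show ?thesis unfolding E_def using uv by (intro exI[of _ "LNeg u"] exI[of _ "LNeg v"]) simp
qed

lemma E_smul: assumes "E a a'" shows "E (LSmul r a) (LSmul r a')"
proof -
  obtain u v where uv: "Hok u" "Hok v" "lcong RC (LAdd a u) (LAdd a' v)" using assms(1) unfolding E_def by blast
  have "lcong RC (LAdd (LSmul r a) (LSmul r u)) (LSmul r (LAdd a u))" by (rule lcong.sym, rule lcong.smul_add_v)
  also have "lcong RC \<dots> (LSmul r (LAdd a' v))" by (rule lcong.cSmul[OF uv(3)])
  also have "lcong RC \<dots> (LAdd (LSmul r a') (LSmul r v))" by (rule lcong.smul_add_v)
  finally show ?thesis unfolding E_def using uv by (intro exI[of _ "LSmul r u"] exI[of _ "LSmul r v"]) simp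
qed

lemma br_expand: assumes "Cok a" "Cok b" "Hok u" "Hok w"
  shows "\<exists>X. Hok X \<and> lcong RC (LBr (LAdd a u) (LAdd b w)) (LAdd (LBr a b) X)"
proof -
  have "J (LAdd (LBr a w) (LAdd (LBr u b) (LBr u w)))"
    by (rule J_add[OF IL[OF assms(1,4)] J_add[OF J_brl[OF IL[OF assms(2,3)]] J_Hok]]) (simp add: assms)
  then obtain X where X: "Hok X" "lcong RC (LAdd (LBr a w) (LAdd (LBr u b) (LBr u w))) X"
    unfolding J_def by blast
  have "lcong RC (LBr (LAdd a u) (LAdd b w)) (LAdd (LBr a (LAdd b w)) (LBr u (LAdd b w)))"
    by (rule lcong.br_add_l)
  also have "lcong RC \<dots> (LAdd (LAdd (LBr a b) (LBr a w)) (LAdd (LBr u b) (LBr u w)))"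
    by (rule lcong.cAdd; rule lcong.br_add_r)
  also have "lcong RC \<dots> (LAdd (LBr a b) (LAdd (LBr a w) (LAdd (LBr u b) (LBr u w))))"
    by (rule lcong.add_assoc)
  also have "lcong RC \<dots> (LAdd (LBr a b) X)" by (rule lc_add_r[OF X(2)])
  finally show ?thesis using X(1) by blast
qed

lemma E_br: assumes "E a a'" "E b b'" "Cok a" "Cok a'" "Cok b" "Cok b'"
  shows "E (LBr a b) (LBr a' b')"
proof -
  obtain u v where uv: "Hok u" "Hok v" "lcong RC (LAdd a u) (LAdd a' v)" using assms(1) unfolding E_def by blast
  obtain u' v' where uv': "Hok u'" "Hok v'" "lcong RC (LAdd b u') (LAdd b' v')" using assms(2) unfolding E_def by blast
  obtain X where X: "Hok X" "lcong RC (LBr (LAdd a u) (LAdd b u')) (LAdd (LBr a b) X)"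
    using br_expand[OF assms(3,5) uv(1) uv'(1)] by blast
  obtain Y where Y: "Hok Y" "lcong RC (LBr (LAdd a' v) (LAdd b' v')) (LAdd (LBr a' b') Y)"
    using br_expand[OF assms(4,6) uv(2) uv'(2)] by blast
  have "lcong RC (LAdd (LBr a b) X) (LBr (LAdd a u) (LAdd b u'))" by (rule lcong.sym[OF X(2)])
  also have "lcong RC \<dots> (LBr (LAdd a' v) (LAdd b' v'))" by (rule lcong.cBr[OF uv(3) uv'(3)])
  also have "lcong RC \<dots> (LAdd (LBr a' b') Y)" by (rule Y(2))
  finally show ?thesis unfolding E_def using X Y by blast
qed

lemma E_J: assumes "J x" "lcong RC s (LAdd t x)" shows "E s t"
proof -
  obtain v where v: "Hok v" "lcong RC x v" using assms(1) unfolding J_def by blast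
  have "lcong RC (LAdd s LZero) s" by (rule lcong.add_zero)
  also have "lcong RC \<dots> (LAdd t x)" by (rule assms(2))
  also have "lcong RC \<dots> (LAdd t v)" by (rule lc_add_r[OF v(2)])
  finally show ?thesis unfolding E_def using v by (intro exI[of _ LZero] exI[of _ v]) simp
qed

lemma E_zero: assumes "E t LZero" shows "\<exists>w. Hok w \<and> lcong RC t w"
proof -
  obtain u v where uv: "Hok u" "Hok v" "lcong RC (LAdd t u) (LAdd LZero v)" using assms unfolding E_def by blast
  have "lcong RC t (LAdd t LZero)" by (rule lcong.sym, rule lcong.add_zero)
  also have "lcong RC \<dots> (LAdd t (LAdd u (LNeg u)))" by (rule lc_add_r, rule lcong.sym, rule lcong.add_neg)
  also have "lcong RC \<dots> (LAdd (LAdd t u) (LNeg u))" by (rule lc_assoc_sym)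
  also have "lcong RC \<dots> (LAdd (LAdd LZero v) (LNeg u))" by (rule lc_add_l[OF uv(3)])
  also have "lcong RC \<dots> (LAdd v (LNeg u))" by (rule lc_add_l, rule lc_zero_l)
  finally show ?thesis using uv by (intro exI[of _ "LAdd v (LNeg u)"]) simp
qed

lemma RCT1: assumes "x \<in> C" "h \<in> H" "y \<in> C" shows "E (TT (ad x h) y) (TT x y)"
proof (rule E_J)
  show "J (TT h y)" using assms by (intro J_Hok) simp
  show "lcong RC (TT (ad x h) y) (LAdd (TT x y) (TT h y))" using assms HC' by (intro lcr rel3) auto
qed

lemma RCT2: assumes "x \<in> C" "h \<in> H" "y \<in> C" shows "E (TT y (ad x h)) (TT y x)"
proof (rule E_J)
  show "J (LNeg (TT h y))" using assms by (intro J_neg J_Hok) simp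
  have "lcong RC (TT y (ad x h)) (LAdd (TT y x) (TT y h))" using assms HC' by (intro lcr rel4) auto
  also have "lcong RC \<dots> (LAdd (TT y x) (LNeg (TT h y)))" by (rule lc_add_r, rule Tanti) (use assms HC' in auto)
  finally show "lcong RC (TT y (ad x h)) (LAdd (TT y x) (LNeg (TT h y)))" .
qed

lemma RCB: assumes "x \<in> C" "h \<in> H" "q \<noteq> 0" shows "E (BB (ad x h)) (BB x)"
proof (rule E_J)
  show "J (BB h)" using assms by (intro J_Hok) simp
  have hC: "h \<in> C" using assms HC' by auto
  have "ad x h = ad (sm 1 x) (sm 1 h)" using assms hC by (simp add: sm1)
  then have "lcong RC (BB (ad x h)) (LAdd (LSmul 1 (BB x)) (LSmul 1 (BB h)))"
    using assms hC rel9[where L=L and H=C and q=q and r=1 and r'=1 and h=x and h'=h] by (simp add: lcr)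
  also have "lcong RC \<dots> (LAdd (BB x) (BB h))" by (rule lcong.cAdd; rule lcong.smul_one)
  finally show "lcong RC (BB (ad x h)) (LAdd (BB x) (BB h))" .
qed

lemma ET1: "x \<in> C \<Longrightarrow> x' \<in> C \<Longrightarrow> y \<in> C \<Longrightarrow> cos x = cos x' \<Longrightarrow> E (TT x y) (TT x' y)"
  using cos_eqD RCT1 E_sym by metis
lemma ET2: "x \<in> C \<Longrightarrow> x' \<in> C \<Longrightarrow> y \<in> C \<Longrightarrow> cos x = cos x' \<Longrightarrow> E (TT y x) (TT y x')"
  using cos_eqD RCT2 E_sym by metis
lemma EB: "x \<in> C \<Longrightarrow> x' \<in> C \<Longrightarrow> q \<noteq> 0 \<Longrightarrow> cos x = cos x' \<Longrightarrow> E (BB x) (BB x')"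
  using cos_eqD RCB E_sym by metis

end



context LHq
begin

abbreviation "CQ \<equiv> lcarrier Q"
abbreviation "RQ \<equiv> exterior_rels Q CQ q"
abbreviation "RH \<equiv> exterior_rels L H q"
abbreviation "Qok \<equiv> okt (tgen_ok Q CQ q)"

definition phi :: "'a tgen \<Rightarrow> ('r, 'a set tgen) lterm" where
  "phi = (\<lambda>x. Gen (case x of Tns g g' \<Rightarrow> Tns (cos g) (cos g') | Brc g \<Rightarrow> Brc (cos g)))"

definition psi :: "'a set tgen \<Rightarrow> ('r, 'a tgen) lterm" where
  "psi X = (if tgen_ok Q CQ q X then Gen (case X of Tns A B \<Rightarrow> Tns (crep A) (crep B) | Brc A \<Rightarrow> Brc (crep A))
            else LZero)"

lemma phi_simps[simp]: "phi (Tns g g') = TT (cos g) (cos g')" "phi (Brc g) = BB (cos g)"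
  by (simp_all add: phi_def)

lemma cosQ[simp]: "x \<in> C \<Longrightarrow> cos x \<in> CQ" by (simp add: Q_carrier)

lemma CQ_E: "X \<in> CQ \<Longrightarrow> \<exists>x\<in>C. X = cos x" by (auto simp: Q_carrier)

lemma crepC: "X \<in> CQ \<Longrightarrow> crep X \<in> C" using CQ_E crep_cosC by blast
lemma cos_crepQ: "X \<in> CQ \<Longrightarrow> cos (crep X) = X" using CQ_E cos_crep by blast

lemma Cok_psi: "Cok (lterm_map psi t)"
proof (induction t)
  case (Gen X) show ?case
  proof (cases X)
    case (Tns A B) then show ?thesis by (simp add: psi_def crepC)
  next
    case (Brc A) then show ?thesis by (simp add: psi_def crepC)
  qed
qed simp_all

lemma phi_rel: assumes "(s, t) \<in> RC" shows "(lterm_map phi s, lterm_map phi t) \<in> RQ"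
  using assms
proof (cases rule: rels_cases)
  case (R1 r h g) thus ?thesis using rel1[where L=Q and H=CQ and q=q and r=r and h="cos h" and g="cos g"]
    by (simp add: Q_sm)
next
  case (R2 r h g) thus ?thesis using rel2[where L=Q and H=CQ and q=q and r=r and h="cos h" and g="cos g"]
    by (simp add: Q_sm)
next
  case (R3 h h' g) thus ?thesis using rel3[where L=Q and H=CQ and q=q and h'="cos h'" and h="cos h" and g="cos g"]
    by (simp add: Q_add)
next
  case (R4 h g g') thus ?thesis using rel4[where L=Q and H=CQ and q=q and g'="cos g'" and h="cos h" and g="cos g"]
    by (simp add: Q_add)
next
  case (R5 h h' g) thus ?thesis using rel5[where L=Q and H=CQ and q=q and h'="cos h'" and h="cos h" and g="cos g"]
    by (simp add: Q_br)
next
  case (R6 h g g') thus ?thesis using rel6[where L=Q and H=CQ and q=q and g'="cos g'" and h="cos h" and g="cos g"]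
    by (simp add: Q_br)
next
  case (R7 h g h' g') thus ?thesis using rel7[where L=Q and H=CQ and q=q and g'="cos g'" and h="cos h" and g="cos g" and h'="cos h'"]
    by (simp add: Q_br)
next
  case (R8 h' h g) thus ?thesis using rel8[where L=Q and H=CQ and q=q and h'="cos h'" and h="cos h" and g="cos g"]
    by (simp add: Q_br Q_sm smC)
next
  case (R9 r r' h h') thus ?thesis using rel9[where L=Q and H=CQ and q=q and r=r and r'=r' and h'="cos h'" and h="cos h"]
    by (simp add: Q_add Q_sm smC)
next
  case (R10 h h') thus ?thesis using rel10[where L=Q and H=CQ and q=q and h'="cos h'" and h="cos h"]
    by (simp add: Q_sm)
next
  case (R11 h g) thus ?thesis using rel11[where L=Q and H=CQ and q=q and g="cos g" and h="cos h"]
    by (simp add: Q_br)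
next
  case (R12 h) thus ?thesis using rel12[where L=Q and H=CQ and q=q and h="cos h"]
    by simp
qed

lemma psi_rel: assumes "(s, t) \<in> RQ"
  shows "\<exists>s0 t0. (s0, t0) \<in> RC \<and> s = lterm_map phi s0 \<and> t = lterm_map phi t0 \<and> Cok s0 \<and> Cok t0"
  using assms
proof (cases rule: rels_cases)
  case (R1 r A B)
  then obtain a b where ab: "a \<in> C" "b \<in> C" "A = cos a" "B = cos b" using CQ_E by metis
  show ?thesis using ab R1
    by (intro exI[of _ "LSmul r (TT a b)"] exI[of _ "TT (sm r a) b"]) (simp add: Q_sm rel1 smC)
next
  case (R2 r A B)
  then obtain a b where ab: "a \<in> C" "b \<in> C" "A = cos a" "B = cos b" using CQ_E by metis
  show ?thesis using ab R2
    by (intro exI[of _ "LSmul r (TT a b)"] exI[of _ "TT a (sm r b)"]) (simp add: Q_sm rel2 smC)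
next
  case (R3 A A' B)
  then obtain a a' b where ab: "a \<in> C" "a' \<in> C" "b \<in> C" "A = cos a" "A' = cos a'" "B = cos b" using CQ_E by metis
  show ?thesis using ab R3
    by (intro exI[of _ "TT (ad a a') b"] exI[of _ "LAdd (TT a b) (TT a' b)"]) (simp add: Q_add rel3 addC)
next
  case (R4 A B B')
  then obtain a b b' where ab: "a \<in> C" "b \<in> C" "b' \<in> C" "A = cos a" "B = cos b" "B' = cos b'" using CQ_E by metis
  show ?thesis using ab R4
    by (intro exI[of _ "TT a (ad b b')"] exI[of _ "LAdd (TT a b) (TT a b')"]) (simp add: Q_add rel4 addC)
next
  case (R5 A A' B)
  then obtain a a' b where ab: "a \<in> C" "a' \<in> C" "b \<in> C" "A = cos a" "A' = cos a'" "B = cos b" using CQ_E by metis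
  show ?thesis using ab R5
    by (intro exI[of _ "TT (br a a') b"] exI[of _ "LAdd (TT a (br a' b)) (LNeg (TT a' (br a b)))"])
      (simp add: Q_br rel5 brC)
next
  case (R6 A B B')
  then obtain a b b' where ab: "a \<in> C" "b \<in> C" "b' \<in> C" "A = cos a" "B = cos b" "B' = cos b'" using CQ_E by metis
  show ?thesis using ab R6
    by (intro exI[of _ "TT a (br b b')"] exI[of _ "LAdd (TT (br b' a) b) (LNeg (TT (br b a) b'))"])
      (simp add: Q_br rel6 brC)
next
  case (R7 A B A' B')
  then obtain a b a' b' where ab: "a \<in> C" "b \<in> C" "a' \<in> C" "b' \<in> C" "A = cos a" "B = cos b" "A' = cos a'" "B' = cos b'"
    using CQ_E by metis
  show ?thesis using ab R7
    by (intro exI[of _ "LBr (TT a b) (TT a' b')"] exI[of _ "TT (br a b) (br a' b')"]) (simp add: Q_br rel7 brC)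
next
  case (R8 A' A B)
  then obtain a' a b where ab: "a' \<in> C" "a \<in> C" "b \<in> C" "A' = cos a'" "A = cos a" "B = cos b" using CQ_E by metis
  show ?thesis using ab R8
    by (intro exI[of _ "LBr (BB a') (TT a b)"] exI[of _ "LAdd (TT (br (qq a') a) b) (TT a (br (qq a') b))"])
      (simp add: Q_br Q_sm rel8 brC smC)
next
  case (R9 r r' A A')
  then obtain a a' where ab: "a \<in> C" "a' \<in> C" "A = cos a" "A' = cos a'" using CQ_E by metis
  show ?thesis using ab R9
    by (intro exI[of _ "BB (ad (sm r a) (sm r' a'))"] exI[of _ "LAdd (LSmul r (BB a)) (LSmul r' (BB a'))"])
      (simp add: Q_add Q_sm rel9 addC smC)
next
  case (R10 A A')
  then obtain a a' where ab: "a \<in> C" "a' \<in> C" "A = cos a" "A' = cos a'" using CQ_E by metis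
  show ?thesis using ab R10
    by (intro exI[of _ "LBr (BB a) (BB a')"] exI[of _ "TT (qq a) (qq a')"]) (simp add: Q_sm rel10 smC)
next
  case (R11 A B)
  then obtain a b where ab: "a \<in> C" "b \<in> C" "A = cos a" "B = cos b" using CQ_E by metis
  show ?thesis using ab R11
    by (intro exI[of _ "BB (br a b)"] exI[of _ "LSmul (of_nat q) (TT a b)"]) (simp add: Q_br rel11 brC)
next
  case (R12 A)
  then obtain a where ab: "a \<in> C" "A = cos a" using CQ_E by metis
  show ?thesis using ab R12
    by (intro exI[of _ "TT a a"] exI[of _ "LZero"]) (simp add: rel12)
qed

lemma PSI: "Cok t \<Longrightarrow> E (lterm_map psi (lterm_map phi t)) t"
proof (induction t)
  case (Gen x)
  show ?case
  proof (cases x)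
    case (Tns g g')
    then have g: "g \<in> C" "g' \<in> C" using Gen by auto
    have "lterm_map psi (lterm_map phi (Gen x)) = TT (crep (cos g)) (crep (cos g'))"
      using g Tns by (simp add: psi_def)
    moreover have "E (TT (crep (cos g)) (crep (cos g'))) (TT g (crep (cos g')))"
      using g by (intro ET1 crep_cosC cos_crep)
    moreover have "E (TT g (crep (cos g'))) (TT g g')"
      using g by (intro ET2 crep_cosC cos_crep)
    ultimately show ?thesis using Tns E_trans by simp
  next
    case (Brc g)
    then have g: "g \<in> C" "q \<noteq> 0" using Gen by auto
    have "lterm_map psi (lterm_map phi (Gen x)) = BB (crep (cos g))"
      using g Brc by (simp add: psi_def)
    moreover have "E (BB (crep (cos g))) (BB g)"
      using g by (intro EB crep_cosC cos_crep)
    ultimately show ?thesis using Brc by simp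
  qed
next
  case LZero show ?case by (simp add: E_refl)
next
  case (LAdd a b) then show ?case by (simp add: E_add)
next
  case (LNeg a) then show ?case by (simp add: E_neg)
next
  case (LSmul r a) then show ?case by (simp add: E_smul)
next
  case (LBr a b)
  then show ?case using E_br[of _ a _ b] Cok_psi
    by (metis lterm_map.simps(6) okt_simps(6))
qed

lemma RQ_E: "lcong RQ a b \<Longrightarrow> E (lterm_map psi a) (lterm_map psi b)"
proof (induction rule: lcong.induct)
  case (rel s t)
  then obtain s0 t0 where st: "(s0, t0) \<in> RC" "s = lterm_map phi s0" "t = lterm_map phi t0" "Cok s0" "Cok t0"
    using psi_rel by blast
  have "E (lterm_map psi s) s0" using PSI st by simp
  moreover have "E s0 t0" by (rule E_lc, rule lcr, rule st(1))
  moreover have "E t0 (lterm_map psi t)" using PSI st E_sym by simp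
  ultimately show ?case using E_trans by blast
next
  case (refl t) show ?case by (rule E_refl)
next
  case (sym s t) from sym.IH show ?case by (rule E_sym)
next
  case (trans s t u) from trans.IH show ?case by (rule E_trans)
next
  case (cAdd a a' b b') then show ?case by (simp add: E_add)
next
  case (cNeg a a') then show ?case by (simp add: E_neg)
next
  case (cSmul a a' r) then show ?case by (simp add: E_smul)
next
  case (cBr a a' b b') then show ?case by (simp add: E_br Cok_psi)
qed (simp_all, (rule E_lc, rule lcong.add_assoc lcong.add_comm lcong.add_zero lcong.add_neg
      lcong.smul_one lcong.smul_mult lcong.smul_add_s lcong.smul_add_v lcong.br_add_l lcong.br_add_r
      lcong.br_smul_l lcong.br_smul_r lcong.br_alt lcong.jacobi)+)

lemma phi_zero: "Hok t \<Longrightarrow> lcong RQ (lterm_map phi t) LZero"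
proof (induction t)
  case (Gen x)
  show ?case
  proof (cases x)
    case (Tns h g)
    then have hg: "h \<in> H" "g \<in> C" using Gen by auto
    have ch: "cos h = cos z" using hg cos_H by simp
    have "(TT (ladd Q (cos z) (cos z)) (cos g), LAdd (TT (cos z) (cos g)) (TT (cos z) (cos g))) \<in> RQ"
      using hg zC by (intro rel3) simp_all
    moreover have "ladd Q (cos z) (cos z) = cos z" using zC by (simp add: Q_add add0)
    ultimately have "lcong RQ (TT (cos z) (cos g)) (LAdd (TT (cos z) (cos g)) (TT (cos z) (cos g)))"
      by (simp add: lcong.rel)
    then show ?thesis using Tns ch by (simp add: lc_selfzero)
  next
    case (Brc h)
    then have hg: "h \<in> H" "q \<noteq> 0" using Gen by auto
    have ch: "cos h = cos z" using hg cos_H by simp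
    have "(BB (ladd Q (lsmul Q 1 (cos z)) (lsmul Q 1 (cos z))), LAdd (LSmul 1 (BB (cos z))) (LSmul 1 (BB (cos z)))) \<in> RQ"
      using hg zC by (intro rel9) simp_all
    moreover have "ladd Q (lsmul Q 1 (cos z)) (lsmul Q 1 (cos z)) = cos z" using zC by (simp add: Q_add Q_sm add0 sm1)
    ultimately have "lcong RQ (BB (cos z)) (LAdd (LSmul 1 (BB (cos z))) (LSmul 1 (BB (cos z))))"
      by (simp add: lcong.rel)
    also have "lcong RQ \<dots> (LAdd (BB (cos z)) (BB (cos z)))" by (rule lcong.cAdd; rule lcong.smul_one)
    finally show ?thesis using Brc ch by (simp add: lc_selfzero)
  qed
next
  case LZero show ?case by (simp add: lcong.refl)
next
  case (LAdd a b)
  then have "lcong RQ (lterm_map phi (LAdd a b)) (LAdd LZero LZero)" by (simp add: lcong.cAdd)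
  then show ?case using lcong.add_zero lcong.trans by blast
next
  case (LNeg a)
  then have "lcong RQ (lterm_map phi (LNeg a)) (LNeg LZero)" by (simp add: lcong.cNeg)
  then show ?case using lc_neg_zero lcong.trans by blast
next
  case (LSmul r a)
  then have "lcong RQ (lterm_map phi (LSmul r a)) (LSmul r LZero)" by (simp add: lcong.cSmul)
  then show ?case using lc_smul_zero lcong.trans by blast
next
  case (LBr a b)
  then have "lcong RQ (lterm_map phi (LBr a b)) (LBr LZero LZero)" by (simp add: lcong.cBr)
  then show ?case using lc_br_zero_r lcong.trans by blast
qed

end



lemma carrier_ext: "lcarrier (exterior_q L' H' q') = {pclass (exterior_rels L' H' q') t | t. okt (tgen_ok L' H' q') t}"
  by (simp add: exterior_q_def presented_def okt_def)

lemma zero_ext: "lzero (exterior_q L' H' q') = pclass (exterior_rels L' H' q') LZero"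
  by (simp add: exterior_q_def presented_def)

lemma okt_mono: "(\<And>x. P x \<Longrightarrow> P' x) \<Longrightarrow> okt P t \<Longrightarrow> okt P' t"
  by (auto simp: okt_def)

context LHq
begin

lemma Hok_Cok: "Hok t \<Longrightarrow> Cok t"
proof (induction t)
  case (Gen x) then show ?case by (cases x) (auto simp: HC')
qed simp_all

lemma incl_pc: "ext_incl L q (pclass RH t) = pclass RC t"
proof -
  have "lcong RH (crep (pclass RH t)) t" by (rule lcong.sym, rule crep_pclass)
  moreover have "RH \<subseteq> RC"
  proof clarify
    fix s t assume "(s, t) \<in> RH" then show "(s, t) \<in> RC" by (rule rels_mono[OF HC])
  qed
  ultimately have "lcong RC (crep (pclass RH t)) t" by (rule lc_mono)
  then show ?thesis unfolding ext_incl_def induced_map_def lterm_map_Gen by (simp add: pclass_eq)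
qed

lemma proj_eq: "ext_proj L H q X = pclass RQ (lterm_map phi (crep X))"
  unfolding ext_proj_def Let_def induced_map_def phi_def by simp

lemma proj_pc: "ext_proj L H q (pclass RC t) = pclass RQ (lterm_map phi t)"
proof -
  have "lcong RC (crep (pclass RC t)) t" by (rule lcong.sym, rule crep_pclass)
  then have "lcong RQ (lterm_map phi (crep (pclass RC t))) (lterm_map phi t)"
    by (rule lc_hom) (rule lcong.rel, erule phi_rel)
  then show ?thesis unfolding proj_eq by (simp add: pclass_eq)
qed

lemma Qok_phi: "Cok t \<Longrightarrow> Qok (lterm_map phi t)"
proof (induction t)
  case (Gen x) then show ?case by (cases x) auto
qed simp_all

lemma phi_psi: "Qok s \<Longrightarrow> lterm_map phi (lterm_map psi s) = s"
proof -
  assume s: "Qok s"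
  have "lterm_map phi (lterm_map psi s) = lterm_map (\<lambda>x. lterm_map phi (psi x)) s" by (rule lterm_map_comp)
  also have "\<dots> = lterm_map Gen s"
  proof (rule lterm_map_cong)
    fix X assume "X \<in> lgens s"
    then have X: "tgen_ok Q CQ q X" using s by (auto simp: okt_def)
    show "lterm_map phi (psi X) = Gen X"
    proof (cases X)
      case (Tns A B) then show ?thesis using X by (simp add: psi_def cos_crepQ)
    next
      case (Brc A) then show ?thesis using X by (simp add: psi_def cos_crepQ)
    qed
  qed
  finally show ?thesis by (simp add: lterm_map_Gen)
qed

lemma main: "ext_incl L q ` lcarrier (exterior_q L H q) =
           {x \<in> lcarrier (exterior_q L (lcarrier L) q).
              ext_proj L H q x =
                lzero (exterior_q (quotient_lie L H) (lcarrier (quotient_lie L H)) q)} \<and>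
         ext_proj L H q ` lcarrier (exterior_q L (lcarrier L) q) =
           lcarrier (exterior_q (quotient_lie L H) (lcarrier (quotient_lie L H)) q)"
proof (intro conjI equalityI subsetI)
  fix x assume "x \<in> ext_incl L q ` lcarrier (exterior_q L H q)"
  then obtain t where t: "Hok t" "x = ext_incl L q (pclass RH t)" by (auto simp: carrier_ext)
  have x: "x = pclass RC t" using t incl_pc by simp
  have "lcong RQ (lterm_map phi t) LZero" by (rule phi_zero[OF t(1)])
  then have "ext_proj L H q x = pclass RQ LZero" using x proj_pc by (simp add: pclass_eq)
  moreover have "x \<in> lcarrier (exterior_q L C q)" using x Hok_Cok[OF t(1)] by (auto simp: carrier_ext)
  ultimately show "x \<in> {x \<in> lcarrier (exterior_q L C q). ext_proj L H q x = lzero (exterior_q Q CQ q)}"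
    by (simp add: zero_ext)
next
  fix x assume "x \<in> {x \<in> lcarrier (exterior_q L C q). ext_proj L H q x = lzero (exterior_q Q CQ q)}"
  then obtain t where t: "Cok t" "x = pclass RC t" "ext_proj L H q x = pclass RQ LZero"
    by (auto simp: carrier_ext zero_ext)
  then have "pclass RQ (lterm_map phi t) = pclass RQ LZero" using proj_pc by simp
  then have "lcong RQ (lterm_map phi t) LZero" by (simp add: pclass_eq)
  then have "E (lterm_map psi (lterm_map phi t)) LZero" using RQ_E by fastforce
  then have "E t LZero" using E_trans[OF E_sym[OF PSI[OF t(1)]]] by blast
  then obtain w where w: "Hok w" "lcong RC t w" using E_zero by blast
  have "x = ext_incl L q (pclass RH w)" using t(2) w(2) incl_pc by (simp add: pclass_eq)
  moreover have "pclass RH w \<in> lcarrier (exterior_q L H q)" using w(1) by (auto simp: carrier_ext)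
  ultimately show "x \<in> ext_incl L q ` lcarrier (exterior_q L H q)" by blast
next
  fix y assume "y \<in> ext_proj L H q ` lcarrier (exterior_q L C q)"
  then obtain t where t: "Cok t" "y = ext_proj L H q (pclass RC t)" by (auto simp: carrier_ext)
  then have "y = pclass RQ (lterm_map phi t)" using proj_pc by simp
  then show "y \<in> lcarrier (exterior_q Q CQ q)" using Qok_phi[OF t(1)] by (auto simp: carrier_ext)
next
  fix y assume "y \<in> lcarrier (exterior_q Q CQ q)"
  then obtain s where s: "Qok s" "y = pclass RQ s" by (auto simp: carrier_ext)
  have "ext_proj L H q (pclass RC (lterm_map psi s)) = y" using s proj_pc phi_psi by simp
  moreover have "pclass RC (lterm_map psi s) \<in> lcarrier (exterior_q L C q)"
    using Cok_psi by (auto simp: carrier_ext)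
  ultimately show "y \<in> ext_proj L H q ` lcarrier (exterior_q L C q)" by blast
qed

end

theorem proposition3p2:
  fixes L :: "('r::comm_ring_1, 'a) lie_alg" and H :: "'a set" and q :: nat
  assumes "lie_algebra L" and "lie_ideal L H"
  shows "ext_incl L q ` lcarrier (exterior_q L H q) =
           {x \<in> lcarrier (exterior_q L (lcarrier L) q).
              ext_proj L H q x =
                lzero (exterior_q (quotient_lie L H) (lcarrier (quotient_lie L H)) q)} \<and>
         ext_proj L H q ` lcarrier (exterior_q L (lcarrier L) q) =
           lcarrier (exterior_q (quotient_lie L H) (lcarrier (quotient_lie L H)) q)"
proof -
  interpret LHq L H q by unfold_locales (fact assms)+
  show ?thesis by (rule main)
qed


end
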